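(* Let $b,c>0$, let $x_1,x_2,\dots\in\mathbb{R}^d$ and $y_1,y_2,\dots\in\mathbb{R}$. For $t\ge1$ define \[ Q_t(u_1,\dots,u_t)=b\|u_1\|^2+c\sum_{s=1}^{t-1}\|u_{s+1}-u_s\|^2+\sum_{s=1}^t (y_s-u_s^\top x_s)^2 \] and $P_t(u_t)=\min_{u_1,\dots,u_{t-1}}Q_t(u_1,\dots,u_t)$ (with $P_1=Q_1$). Define $D_1=bI+x_1x_1^\top$, $e_1=y_1x_1$, $f_1=y_1^2$, and for $t\ge2$ \[ D_t=\big(D_{t-1}^{-1}+c^{-1}I\big)^{-1}+x_tx_t^\top,\quad e_t=\big(I+c^{-1}D_{t-1}\big)^{-1}e_{t-1}+y_tx_t,\quad f_t=f_{t-1}-e_{t-1}^\top\big(cI+D_{t-1}\big)^{-1}e_{t-1}+y_t^2 . \] Then for every $t\ge1$ the matrix $D_t\in\mathbb{R}^{d\times d}$ is positive definite and, for all $u_t\in\mathbb{R}^d$, \[ P_t(u_t)=u_t^\top D_tu_t-2u_t^\top e_t+f_t . \] *)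

theory Defs
  imports "HOL-Analysis.Analysis"
begin

definition outerp :: "real^'d \<Rightarrow> real^'d \<Rightarrow> real^'d^'d" where
  "outerp x z = (\<chi> i j. x $ i * z $ j)"

definition pos_def :: "real^'d^'d \<Rightarrow> bool" where
  "pos_def A \<longleftrightarrow> transpose A = A \<and> (\<forall>v. v \<noteq> 0 \<longrightarrow> v \<bullet> (A *v v) > 0)"

definition Qf :: "real \<Rightarrow> real \<Rightarrow> (nat \<Rightarrow> real^'d) \<Rightarrow> (nat \<Rightarrow> real) \<Rightarrow> nat
    \<Rightarrow> (nat \<Rightarrow> real^'d) \<Rightarrow> real" where
  "Qf b c x y t u = b * (norm (u 1))^2 + c * (\<Sum>s=1..t-1. (norm (u (s+1) - u s))^2)
      + (\<Sum>s=1..t. (y s - u s \<bullet> x s)^2)"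

text \<open>P_t(v) = min over u_1..u_{t-1} of Q_t(u_1,...,u_{t-1},v) (infimum; attainment stated separately).\<close>
definition Pf :: "real \<Rightarrow> real \<Rightarrow> (nat \<Rightarrow> real^'d) \<Rightarrow> (nat \<Rightarrow> real) \<Rightarrow> nat
    \<Rightarrow> real^'d \<Rightarrow> real" where
  "Pf b c x y t v = Inf {Qf b c x y t u | u. u t = v}"

text \<open>The recursion for (D_t, e_t, f_t), t \<ge> 1 (index 0 is a dummy).\<close>
fun DEF :: "real \<Rightarrow> real \<Rightarrow> (nat \<Rightarrow> real^'d) \<Rightarrow> (nat \<Rightarrow> real) \<Rightarrow> nat
    \<Rightarrow> (real^'d^'d) \<times> (real^'d) \<times> real" where
  "DEF b c x y 0 = (mat 0, 0, 0)"
| "DEF b c x y (Suc 0) = (b *\<^sub>R mat 1 + outerp (x 1) (x 1), y 1 *\<^sub>R x 1, (y 1)^2)"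
| "DEF b c x y (Suc (Suc n)) =
     (let (D, e, f) = DEF b c x y (Suc n); t = Suc (Suc n) in
      (matrix_inv (matrix_inv D + (1/c) *\<^sub>R mat 1) + outerp (x t) (x t),
       matrix_inv (mat 1 + (1/c) *\<^sub>R D) *v e + y t *\<^sub>R x t,
       f - e \<bullet> (matrix_inv (c *\<^sub>R mat 1 + D) *v e) + (y t)^2))"

definition Dm where "Dm b c x y t = fst (DEF b c x y t)"
definition ev where "ev b c x y t = fst (snd (DEF b c x y t))"
definition fv where "fv b c x y t = snd (snd (DEF b c x y t))"

end

theory Submission
  imports Defs
begin

lemma transpose_add': "transpose (A + B) = transpose A + transpose (B::real^'n^'n)"
  by (simp add: transpose_def vec_eq_iff)

lemma sym_dot: fixes A :: "real^'n^'n"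
  assumes "transpose A = A" shows "(A *v x) \<bullet> y = x \<bullet> (A *v y)"
proof -
  have "x \<bullet> (A *v y) = (x v* A) \<bullet> y" by (simp add: dot_lmul_matrix)
  also have "x v* A = A *v x" by (metis assms vector_transpose_matrix)
  finally show ?thesis by simp
qed

lemma inv_unique: fixes A B :: "real^'n^'n"
  assumes "A ** B = mat 1" shows "matrix_inv A = B"
proof -
  have BA: "B ** A = mat 1" using assms matrix_left_right_inverse by blast
  have ex: "\<exists>A'. A ** A' = mat 1 \<and> A' ** A = mat 1" using assms BA by blast
  have *: "A ** matrix_inv A = mat 1 \<and> matrix_inv A ** A = mat 1"
    unfolding matrix_inv_def by (rule someI_ex[OF ex])
  have "matrix_inv A = matrix_inv A ** (A ** B)" by (simp add: assms)
  also have "\<dots> = (matrix_inv A ** A) ** B" by (simp add: matrix_mul_assoc)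
  also have "\<dots> = B" using * by simp
  finally show ?thesis .
qed

lemma posdef_inv: fixes A :: "real^'n^'n"
  assumes "pos_def A" shows "A ** matrix_inv A = mat 1" "matrix_inv A ** A = mat 1"
proof -
  have "inj ((*v) A)"
  proof (rule injI)
    fix u w assume "A *v u = A *v w"
    then have "A *v (u - w) = 0" by (simp add: matrix_vector_mult_diff_distrib)
    then show "u = w" using assms unfolding pos_def_def
      by (metis inner_zero_right less_irrefl right_minus_eq)
  qed
  then obtain B where "B ** A = mat 1" using matrix_left_invertible_injective by blast
  then have "A ** B = mat 1" using matrix_left_right_inverse by blast
  then have "matrix_inv A = B" by (rule inv_unique)
  then show "A ** matrix_inv A = mat 1" "matrix_inv A ** A = mat 1"
    using \<open>B ** A = mat 1\<close> \<open>A ** B = mat 1\<close> by auto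
qed

lemma posdef_inv_vec: fixes A :: "real^'n^'n"
  assumes "pos_def A" shows "A *v (matrix_inv A *v v) = v" "matrix_inv A *v (A *v v) = v"
  using posdef_inv[OF assms] by (simp_all add: matrix_vector_mul_assoc)

lemma posdef_inv_posdef: fixes A :: "real^'n^'n"
  assumes "pos_def A" shows "pos_def (matrix_inv A)"
proof -
  have sA: "transpose A = A" using assms pos_def_def by blast
  have "transpose (matrix_inv A) ** A = mat 1"
    by (metis matrix_transpose_mul posdef_inv(1)[OF assms] sA transpose_mat)
  then have "A ** transpose (matrix_inv A) = mat 1" using matrix_left_right_inverse by blast
  then have s: "transpose (matrix_inv A) = matrix_inv A" using inv_unique by metis
  have "v \<bullet> (matrix_inv A *v v) > 0" if "v \<noteq> 0" for v
  proof -
    define w where "w = matrix_inv A *v v"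
    have Aw: "A *v w = v" unfolding w_def by (rule posdef_inv_vec(1)[OF assms])
    have "w \<noteq> 0" using Aw that by auto
    then have "w \<bullet> (A *v w) > 0" using assms pos_def_def by blast
    then show ?thesis using Aw by (simp add: w_def inner_commute)
  qed
  then show ?thesis using s pos_def_def by blast
qed

definition psd :: "real^'d^'d \<Rightarrow> bool" where
  "psd A \<longleftrightarrow> transpose A = A \<and> (\<forall>v. v \<bullet> (A *v v) \<ge> 0)"

lemma posdef_add_psd: fixes A B :: "real^'n^'n"
  assumes "pos_def A" "psd B" shows "pos_def (A + B)"
  using assms unfolding pos_def_def psd_def
  by (simp add: transpose_add' matrix_vector_mult_add_rdistrib inner_add_right add_pos_nonneg)

lemma posdef_psd: "pos_def A \<Longrightarrow> psd A"
  unfolding pos_def_def psd_def by (metis inner_zero_left order.strict_implies_order order_refl)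

lemma scal_id_vec: "(s *\<^sub>R mat 1) *v (v::real^'n) = s *\<^sub>R v"
  by (metis matrix_vector_mul_lid scaleR_matrix_vector_assoc)

lemma posdef_scal: "s > 0 \<Longrightarrow> pos_def (s *\<^sub>R (mat 1 :: real^'n^'n))"
  unfolding pos_def_def by (simp add: scal_id_vec transpose_scalar transpose_mat)

lemma outerp_vec: "outerp x x *v v = (x \<bullet> v) *\<^sub>R (x::real^'n)"
  by (simp add: outerp_def matrix_vector_mult_def vec_eq_iff inner_vec_def sum_distrib_left mult_ac)

lemma psd_outerp: "psd (outerp x (x::real^'n))"
proof -
  have "transpose (outerp x x) = outerp x x"
    by (simp add: transpose_def outerp_def vec_eq_iff mult.commute)
  moreover have "v \<bullet> (outerp x x *v v) \<ge> 0" for v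
    by (simp add: outerp_vec inner_commute)
  ultimately show ?thesis unfolding psd_def by blast
qed

lemma Mn_eq: fixes D :: "real^'n^'n"
  assumes D: "pos_def D" and c: "c > 0"
  shows "matrix_inv (matrix_inv D + (1/c) *\<^sub>R mat 1) = c *\<^sub>R mat 1 - c^2 *\<^sub>R matrix_inv (c *\<^sub>R mat 1 + D)"
proof (rule inv_unique)
  define A where "A = c *\<^sub>R mat 1 + D"
  have A: "pos_def A" unfolding A_def by (metis D add.commute c posdef_add_psd posdef_psd posdef_scal)
  show "(matrix_inv D + (1/c) *\<^sub>R mat 1) ** (c *\<^sub>R mat 1 - c^2 *\<^sub>R matrix_inv (c *\<^sub>R mat 1 + D)) = mat 1"
    unfolding A_def[symmetric]
  proof (subst matrix_eq, intro allI)
    fix z :: "real^'n"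
    define w where "w = matrix_inv A *v z"
    have Aw: "c *\<^sub>R w + D *v w = z" using posdef_inv_vec(1)[OF A, of z]
      by (simp add: A_def w_def matrix_vector_mult_add_rdistrib scal_id_vec)
    have "(c *\<^sub>R mat 1 - c^2 *\<^sub>R matrix_inv A) *v z = c *\<^sub>R z - c^2 *\<^sub>R w"
      by (simp add: matrix_vector_mult_diff_rdistrib scal_id_vec
          scaleR_matrix_vector_assoc[symmetric] w_def[symmetric])
    also have "\<dots> = c *\<^sub>R (D *v w)" by (simp add: Aw[symmetric] algebra_simps power2_eq_square)
    finally have 1: "(c *\<^sub>R mat 1 - c^2 *\<^sub>R matrix_inv A) *v z = c *\<^sub>R (D *v w)" .
    have "(matrix_inv D + (1/c) *\<^sub>R mat 1) *v (c *\<^sub>R (D *v w)) = c *\<^sub>R w + D *v w"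
      using c by (simp add: matrix_vector_mult_add_rdistrib scal_id_vec matrix_scaleR_vector_ac
          scaleR_matrix_vector_assoc[symmetric] posdef_inv_vec(2)[OF D] scaleR_add_right)
    then show "((matrix_inv D + (1/c) *\<^sub>R mat 1) ** (c *\<^sub>R mat 1 - c^2 *\<^sub>R matrix_inv A)) *v z = mat 1 *v z"
      by (simp add: matrix_vector_mul_assoc[symmetric] 1 Aw)
  qed
qed

lemma en_eq: fixes D :: "real^'n^'n"
  assumes D: "pos_def D" and c: "c > 0"
  shows "matrix_inv (mat 1 + (1/c) *\<^sub>R D) = c *\<^sub>R matrix_inv (c *\<^sub>R mat 1 + D)"
proof (rule inv_unique)
  define A where "A = c *\<^sub>R mat 1 + D"
  have A: "pos_def A" unfolding A_def by (metis D add.commute c posdef_add_psd posdef_psd posdef_scal)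
  show "(mat 1 + (1/c) *\<^sub>R D) ** (c *\<^sub>R matrix_inv (c *\<^sub>R mat 1 + D)) = mat 1"
    unfolding A_def[symmetric]
  proof (subst matrix_eq, intro allI)
    fix z :: "real^'n"
    define w where "w = matrix_inv A *v z"
    have Aw: "c *\<^sub>R w + D *v w = z" using posdef_inv_vec(1)[OF A, of z]
      by (simp add: A_def w_def matrix_vector_mult_add_rdistrib scal_id_vec)
    have "(mat 1 + (1/c) *\<^sub>R D) *v (c *\<^sub>R w) = c *\<^sub>R w + D *v w"
      using c by (simp add: matrix_vector_mult_add_rdistrib matrix_scaleR_vector_ac
          scaleR_matrix_vector_assoc[symmetric] scaleR_add_right)
    then show "((mat 1 + (1/c) *\<^sub>R D) ** (c *\<^sub>R matrix_inv A)) *v z = mat 1 *v z"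
      by (simp add: matrix_vector_mul_assoc[symmetric] Aw scaleR_matrix_vector_assoc[symmetric] w_def[symmetric])
  qed
qed

definition qf :: "real^'d^'d \<Rightarrow> real^'d \<Rightarrow> real \<Rightarrow> real^'d \<Rightarrow> real" where
  "qf D e f v = v \<bullet> (D *v v) - 2 * (v \<bullet> e) + f"

lemma key: fixes D :: "real^'n^'n" and e v :: "real^'n"
  assumes D: "pos_def D" and c: "c > 0"
  defines "A \<equiv> c *\<^sub>R mat 1 + D" and "Ai \<equiv> matrix_inv (c *\<^sub>R mat 1 + D)"
    and "z \<equiv> matrix_inv (c *\<^sub>R mat 1 + D) *v (e + c *\<^sub>R v)"
  shows "pos_def A"
    "qf D e f w + c * (norm (v - w))^2 + (yy - v \<bullet> xx)^2 = (w - z) \<bullet> (A *v (w - z)) +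
     qf (matrix_inv (matrix_inv D + (1/c) *\<^sub>R mat 1) + outerp xx xx)
        (matrix_inv (mat 1 + (1/c) *\<^sub>R D) *v e + yy *\<^sub>R xx)
        (f - e \<bullet> (matrix_inv (c *\<^sub>R mat 1 + D) *v e) + yy^2) v"
proof -
  show A: "pos_def A" unfolding A_def by (metis D add.commute c posdef_add_psd posdef_psd posdef_scal)
  have sA: "transpose A = A" using A pos_def_def by blast
  have sAi: "transpose Ai = Ai" using posdef_inv_posdef[OF A] pos_def_def A_def Ai_def by blast
  have sD: "transpose D = D" using D pos_def_def by blast
  have Az: "A *v z = e + c *\<^sub>R v" unfolding z_def using posdef_inv_vec(1)[OF A] A_def by simp
  have Aw: "A *v w = c *\<^sub>R w + D *v w" by (simp add: A_def matrix_vector_mult_add_rdistrib scal_id_vec)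
  have zAw: "z \<bullet> (A *v w) = w \<bullet> (A *v z)" using sym_dot[OF sA, of z w] by (simp add: inner_commute)
  have h1: "(w - z) \<bullet> (A *v (w - z)) = w \<bullet> (A *v w) - 2 * (w \<bullet> (A *v z)) + z \<bullet> (A *v z)"
    using zAw by (simp add: matrix_vector_mult_diff_distrib inner_diff_left inner_diff_right inner_commute)
  have zdef: "z = Ai *v e + c *\<^sub>R (Ai *v v)" unfolding z_def Ai_def
    by (simp add: matrix_vector_right_distrib matrix_scaleR_vector_ac scaleR_matrix_vector_assoc)
  have s1: "e \<bullet> (Ai *v v) = v \<bullet> (Ai *v e)" using sym_dot[OF sAi, of e v] by (simp add: inner_commute)
  have s2: "(Ai *v e) \<bullet> e = e \<bullet> (Ai *v e)" by (simp add: inner_commute)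
  have s3: "(Ai *v v) \<bullet> e = v \<bullet> (Ai *v e)" using sym_dot[OF sAi, of v e] by simp
  have s4: "(Ai *v e) \<bullet> v = v \<bullet> (Ai *v e)" by (simp add: inner_commute)
  have s5: "(Ai *v v) \<bullet> v = v \<bullet> (Ai *v v)" by (simp add: inner_commute)
  have zAz: "z \<bullet> (A *v z) = e \<bullet> (Ai *v e) + 2 * c * (v \<bullet> (Ai *v e)) + c^2 * (v \<bullet> (Ai *v v))"
  proof -
    have ze: "z \<bullet> e = e \<bullet> (Ai *v e) + c * (v \<bullet> (Ai *v e))"
      by (simp add: zdef inner_add_left s2 s3)
    have zv: "z \<bullet> v = v \<bullet> (Ai *v e) + c * (v \<bullet> (Ai *v v))"
      by (simp add: zdef inner_add_left s4 s5)
    show ?thesis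
      by (simp only: Az inner_add_right inner_scaleR_right ze zv) (simp add: algebra_simps power2_eq_square)
  qed
  have nv: "(norm (v - w))^2 = v \<bullet> v - 2 * (v \<bullet> w) + w \<bullet> w"
    by (simp add: power2_norm_eq_inner inner_diff_left inner_diff_right inner_commute)
  have Mn: "v \<bullet> (matrix_inv (matrix_inv D + (1/c) *\<^sub>R mat 1) *v v) = c * (v \<bullet> v) - c^2 * (v \<bullet> (Ai *v v))"
    unfolding Mn_eq[OF D c] Ai_def
    by (simp add: matrix_vector_mult_diff_rdistrib scal_id_vec scaleR_matrix_vector_assoc[symmetric] inner_diff_right)
  have en: "matrix_inv (mat 1 + (1/c) *\<^sub>R D) *v e = c *\<^sub>R (Ai *v e)"
    unfolding en_eq[OF D c] Ai_def by (simp add: scaleR_matrix_vector_assoc[symmetric])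
  show "qf D e f w + c * (norm (v - w))^2 + (yy - v \<bullet> xx)^2 = (w - z) \<bullet> (A *v (w - z)) +
     qf (matrix_inv (matrix_inv D + (1/c) *\<^sub>R mat 1) + outerp xx xx)
        (matrix_inv (mat 1 + (1/c) *\<^sub>R D) *v e + yy *\<^sub>R xx)
        (f - e \<bullet> (matrix_inv (c *\<^sub>R mat 1 + D) *v e) + yy^2) v"
    unfolding qf_def h1 zAz unfolding nv Aw en Ai_def[symmetric] Az
    by (simp add: matrix_vector_mult_add_rdistrib Mn outerp_vec inner_add_right inner_add_left
        inner_commute[of xx v] inner_commute[of w v] algebra_simps power2_eq_square)
qed

lemma Qf_step: "Qf b c x y (Suc (Suc n)) u = Qf b c x y (Suc n) u + c * (norm (u (Suc (Suc n)) - u (Suc n)))^2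
   + (y (Suc (Suc n)) - u (Suc (Suc n)) \<bullet> x (Suc (Suc n)))^2"
  unfolding Qf_def by (simp add: sum.cl_ivl_Suc algebra_simps)

lemma Qf_local: assumes "\<And>s. 1 \<le> s \<Longrightarrow> s \<le> t \<Longrightarrow> u s = u' s" "t \<ge> 1"
  shows "Qf b c x y t u = Qf b c x y t u'"
proof -
  have "(\<Sum>s=1..t-1. (norm (u (s+1) - u s))^2) = (\<Sum>s=1..t-1. (norm (u' (s+1) - u' s))^2)"
    by (rule sum.cong) (use assms in auto)
  moreover have "(\<Sum>s=1..t. (y s - u s \<bullet> x s)^2) = (\<Sum>s=1..t. (y s - u' s \<bullet> x s)^2)"
    by (rule sum.cong) (use assms in auto)
  moreover have "u 1 = u' 1" using assms by auto
  ultimately show ?thesis unfolding Qf_def by simp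
qed

lemma main:
  fixes b c :: real and x :: "nat \<Rightarrow> real^'d" and y :: "nat \<Rightarrow> real"
  assumes b: "b > 0" and c: "c > 0"
  shows "pos_def (Dm b c x y (Suc n)) \<and> (\<forall>v.
     (\<forall>u. u (Suc n) = v \<longrightarrow> qf (Dm b c x y (Suc n)) (ev b c x y (Suc n)) (fv b c x y (Suc n)) v \<le> Qf b c x y (Suc n) u)
   \<and> (\<exists>u. u (Suc n) = v \<and> Qf b c x y (Suc n) u = qf (Dm b c x y (Suc n)) (ev b c x y (Suc n)) (fv b c x y (Suc n)) v))"
proof (induction n)
  case 0
  have D1: "Dm b c x y (Suc 0) = b *\<^sub>R mat 1 + outerp (x 1) (x 1)"
    "ev b c x y (Suc 0) = y 1 *\<^sub>R x 1" "fv b c x y (Suc 0) = (y 1)^2"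
    by (simp_all add: Dm_def ev_def fv_def)
  have pd: "pos_def (Dm b c x y (Suc 0))" unfolding D1 by (rule posdef_add_psd[OF posdef_scal[OF b] psd_outerp])
  have eq: "Qf b c x y (Suc 0) u = qf (Dm b c x y (Suc 0)) (ev b c x y (Suc 0)) (fv b c x y (Suc 0)) (u 1)" for u
  proof -
    have nn: "norm w * norm w = w \<bullet> w" for w :: "real^'d" by (metis power2_eq_square power2_norm_eq_inner)
    have cm: "x (Suc 0) \<bullet> u (Suc 0) = u (Suc 0) \<bullet> x (Suc 0)" by (simp add: inner_commute)
    show ?thesis unfolding D1 Qf_def qf_def
      by (simp add: matrix_vector_mult_add_rdistrib scal_id_vec outerp_vec inner_add_right nn cm
        algebra_simps power2_eq_square)
  qed
  show ?case using pd eq by (auto intro!: exI[of _ "\<lambda>_. _"])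
next
  case (Suc n)
  obtain D e f where DEF: "DEF b c x y (Suc n) = (D, e, f)" by (cases "DEF b c x y (Suc n)") auto
  have old: "Dm b c x y (Suc n) = D" "ev b c x y (Suc n) = e" "fv b c x y (Suc n) = f"
    using DEF by (simp_all add: Dm_def ev_def fv_def)
  define t where "t = Suc (Suc n)"
  have new: "Dm b c x y t = matrix_inv (matrix_inv D + (1/c) *\<^sub>R mat 1) + outerp (x t) (x t)"
    "ev b c x y t = matrix_inv (mat 1 + (1/c) *\<^sub>R D) *v e + y t *\<^sub>R x t"
    "fv b c x y t = f - e \<bullet> (matrix_inv (c *\<^sub>R mat 1 + D) *v e) + (y t)^2"
    using DEF by (simp_all add: Dm_def ev_def fv_def t_def)
  have pdD: "pos_def D" and low: "\<And>v u. u (Suc n) = v \<Longrightarrow> qf D e f v \<le> Qf b c x y (Suc n) u"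
    and att: "\<And>v. \<exists>u. u (Suc n) = v \<and> Qf b c x y (Suc n) u = qf D e f v"
    using Suc.IH unfolding old by blast+
  have pd: "pos_def (Dm b c x y t)" unfolding new(1)
    by (rule posdef_add_psd[OF posdef_inv_posdef[OF posdef_add_psd[OF posdef_inv_posdef[OF pdD]
          posdef_psd[OF posdef_scal]]] psd_outerp]) (use c in simp)
  note K1 = key(1)[OF pdD c] and K2 = key(2)[OF pdD c, where e=e and f=f and yy="y t" and xx="x t", folded new]
  have "(\<forall>u. u t = v \<longrightarrow> qf (Dm b c x y t) (ev b c x y t) (fv b c x y t) v \<le> Qf b c x y t u)
   \<and> (\<exists>u. u t = v \<and> Qf b c x y t u = qf (Dm b c x y t) (ev b c x y t) (fv b c x y t) v)" for v
  proof (intro conjI allI impI)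
    fix u assume ut: "u t = v"
    have "Qf b c x y t u = Qf b c x y (Suc n) u + c * (norm (v - u (Suc n)))^2 + (y t - v \<bullet> x t)^2"
      using Qf_step[of b c x y n u] ut t_def by simp
    also have "\<dots> \<ge> qf D e f (u (Suc n)) + c * (norm (v - u (Suc n)))^2 + (y t - v \<bullet> x t)^2"
      using low by simp
    finally show "qf (Dm b c x y t) (ev b c x y t) (fv b c x y t) v \<le> Qf b c x y t u"
      using K2[of "u (Suc n)" v] pos_def_def K1 
      by (smt (verit) inner_zero_left matrix_vector_mult_0_right)
  next
    define z where "z = matrix_inv (c *\<^sub>R mat 1 + D) *v (e + c *\<^sub>R v)"
    obtain u0 where u0: "u0 (Suc n) = z" "Qf b c x y (Suc n) u0 = qf D e f z" using att by blast
    define u where "u = u0(t := v)"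
    have "Qf b c x y (Suc n) u = Qf b c x y (Suc n) u0"
      by (rule Qf_local) (auto simp: u_def t_def)
    moreover have "u (Suc n) = z" "u t = v" using u0 by (auto simp: u_def t_def)
    ultimately have "Qf b c x y t u = qf D e f z + c * (norm (v - z))^2 + (y t - v \<bullet> x t)^2"
      using Qf_step[of b c x y n u] u0 t_def by simp
    also have "\<dots> = qf (Dm b c x y t) (ev b c x y t) (fv b c x y t) v"
      using K2[of z v] by (simp add: z_def)
    finally show "\<exists>u. u t = v \<and> Qf b c x y t u = qf (Dm b c x y t) (ev b c x y t) (fv b c x y t) v"
      using \<open>u t = v\<close> by blast
  qed
  then show ?case using pd by (simp add: t_def)
qed

theorem lemma2:
  fixes b c :: real and x :: "nat \<Rightarrow> real^'d" and y :: "nat \<Rightarrow> real" and t :: nat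
  assumes "b > 0" and "c > 0" and "t \<ge> 1"
  shows "pos_def (Dm b c x y t) \<and>
    (\<forall>v::real^'d.
       Pf b c x y t v = v \<bullet> (Dm b c x y t *v v) - 2 * (v \<bullet> ev b c x y t) + fv b c x y t
     \<and> (\<exists>u. u t = v \<and> Qf b c x y t u = Pf b c x y t v))"
proof -
  obtain n where tn: "t = Suc n" using assms(3) by (cases t) auto
  note M = main[OF assms(1,2), of x y n, folded tn]
  have P: "Pf b c x y t v = qf (Dm b c x y t) (ev b c x y t) (fv b c x y t) v" for v
  proof -
    obtain u0 where u0: "u0 t = v" "Qf b c x y t u0 = qf (Dm b c x y t) (ev b c x y t) (fv b c x y t) v"
      using M by blast
    show ?thesis unfolding Pf_def
    proof (rule cInf_eq_minimum)
      show "qf (Dm b c x y t) (ev b c x y t) (fv b c x y t) v \<in> {Qf b c x y t u |u. u t = v}"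
        using u0 by force
    qed (use M in auto)
  qed
  show ?thesis using M P unfolding qf_def by metis
qed

end
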